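(* Let $d>0$, $r_C>0$, and let $\mathcal{C}=\{(x,y,r_C): x^2+y^2\le d^2\}$ with unit normal $\mathbf{e}_z$. For every integer $l\ge1$, $$v_{l,0}:=\int_{\mathcal{C}}\frac{\boldsymbol{\nu}_{l0}(\theta,\phi)}{R^{l+2}}\cdot\mathbf{e}_z\,dS=2\pi\sqrt{\frac{2l+1}{4\pi}}\left(-(l+1)\,r_C\,\gamma_{1,l+3,0,l}+\gamma_{3,l+4,1,l}\right),$$ where for non-negative integers $a,b,u,v$ $$\gamma_{a,b,u,v}:=\int_0^d\frac{\zeta^a}{(\zeta^2+r_C^2)^{b/2}}\,P_v^{0,u}\!\left(\frac{r_C}{\sqrt{\zeta^2+r_C^2}}\right)d\zeta,$$ and $P_v^{0,u}$ denotes the $u$-th derivative of the Legendre polynomial $P_v^0$.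
   Context: $(R,\theta,\phi)$ are spherical coordinates of $(x,y,r_C)$: $R=\sqrt{x^2+y^2+r_C^2}$, $\theta=\arccos(r_C/R)$, $\phi$ the azimuthal angle of $(x,y)$; $\mathbf{e}_R,\mathbf{e}_\theta,\mathbf{e}_\phi$ the spherical orthonormal frame. $Y_{lm}(\theta,\phi)=\sqrt{\frac{2l+1}{4\pi}\frac{(l-m)!}{(l+m)!}}\,e^{im\phi}P_l^m(\cos\theta)$ with $P_l^m(x)=\frac{(-1)^m}{2^l l!}(1-x^2)^{m/2}\frac{d^{m+l}}{dx^{m+l}}(x^2-1)^l$ (so $P_l^0$ is the Legendre polynomial), and $\boldsymbol{\nu}_{lm}=-(l+1)Y_{lm}\mathbf{e}_R+\frac{\partial Y_{lm}}{\partial\theta}\mathbf{e}_\theta+\frac{imY_{lm}}{\sin\theta}\mathbf{e}_\phi$. *)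

theory Defs
  imports "HOL-Analysis.Analysis"
begin

definition assoc_legendre :: "nat \<Rightarrow> int \<Rightarrow> real \<Rightarrow> real" where
  "assoc_legendre l m x =
     (-1) powi m / (2 ^ l * fact l) * (sqrt (1 - x\<^sup>2) powi m)
     * (deriv ^^ nat (m + int l)) (\<lambda>t. (t\<^sup>2 - 1) ^ l) x"

definition sph_Y :: "nat \<Rightarrow> int \<Rightarrow> real \<Rightarrow> real \<Rightarrow> complex" where
  "sph_Y l m \<theta> \<phi> =
     complex_of_real (sqrt ((2 * real l + 1) / (4 * pi)
        * fact (nat (int l - m)) / fact (nat (int l + m))))
     * exp (\<i> * of_int m * of_real \<phi>)
     * complex_of_real (assoc_legendre l m (cos \<theta>))"

definition e_R :: "real \<Rightarrow> real \<Rightarrow> real^3" where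
  "e_R \<theta> \<phi> = vector [sin \<theta> * cos \<phi>, sin \<theta> * sin \<phi>, cos \<theta>]"
definition e_theta :: "real \<Rightarrow> real \<Rightarrow> real^3" where
  "e_theta \<theta> \<phi> = vector [cos \<theta> * cos \<phi>, cos \<theta> * sin \<phi>, - sin \<theta>]"
definition e_phi :: "real \<Rightarrow> real \<Rightarrow> real^3" where
  "e_phi \<theta> \<phi> = vector [- sin \<phi>, cos \<phi>, 0]"
definition e_z :: "real^3" where
  "e_z = vector [0, 0, 1]"

definition cvec :: "complex \<Rightarrow> real^3 \<Rightarrow> complex^3" where
  "cvec c v = (\<chi> i. c * complex_of_real (v $ i))"

text \<open>Bilinear (non-conjugating) dot product of a complex vector with a real vector.\<close>
definition cdot :: "complex^3 \<Rightarrow> real^3 \<Rightarrow> complex" where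
  "cdot u v = (\<Sum>i\<in>UNIV. u $ i * complex_of_real (v $ i))"

definition nu :: "nat \<Rightarrow> int \<Rightarrow> real \<Rightarrow> real \<Rightarrow> complex^3" where
  "nu l m \<theta> \<phi> =
     cvec (- of_nat (l + 1) * sph_Y l m \<theta> \<phi>) (e_R \<theta> \<phi>)
   + cvec (vector_derivative (\<lambda>t. sph_Y l m t \<phi>) (at \<theta>)) (e_theta \<theta> \<phi>)
   + cvec (\<i> * of_int m * sph_Y l m \<theta> \<phi> / complex_of_real (sin \<theta>)) (e_phi \<theta> \<phi>)"

definition sphR :: "real \<Rightarrow> real \<Rightarrow> real \<Rightarrow> real" where
  "sphR rC x y = sqrt (x\<^sup>2 + y\<^sup>2 + rC\<^sup>2)"
definition sphTheta :: "real \<Rightarrow> real \<Rightarrow> real \<Rightarrow> real" where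
  "sphTheta rC x y = arccos (rC / sphR rC x y)"
definition sphPhi :: "real \<Rightarrow> real \<Rightarrow> real" where
  "sphPhi x y = Arg (Complex x y)"

definition gam :: "real \<Rightarrow> real \<Rightarrow> nat \<Rightarrow> nat \<Rightarrow> nat \<Rightarrow> nat \<Rightarrow> real" where
  "gam d rC a b u v =
     integral {0..d} (\<lambda>\<zeta>. \<zeta> ^ a / (\<zeta>\<^sup>2 + rC\<^sup>2) powr (real b / 2)
        * (deriv ^^ u) (assoc_legendre v 0) (rC / sqrt (\<zeta>\<^sup>2 + rC\<^sup>2)))"

end

theory Submission
  imports Defs "HOL-Computational_Algebra.Polynomial"
begin


lemma measure_eqI_atMost:
  fixes M N :: "real measure"
  assumes sets: "sets M = sets borel" "sets N = sets borel"
  assumes fin: "\<And>x. emeasure M {..x} < \<infinity>"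
  assumes eq: "\<And>x. emeasure M {..x} = emeasure N {..x}"
  shows "M = N"
proof (rule measure_eqI_generator_eq_countable)
  let ?LT = "\<lambda>a::real. {..a}" let ?E = "range ?LT"
  show "Int_stable ?E"
    by (auto simp: Int_stable_def)
  show "?E \<subseteq> Pow UNIV" by auto
  show "sets M = sigma_sets UNIV ?E" "sets N = sigma_sets UNIV ?E"
    unfolding sets by (subst borel_eq_atMost, simp)+
  show "?LT`Nats \<subseteq> ?E" by auto
  show "(\<Union>i\<in>Nats. ?LT i) = UNIV"
    by (auto simp: Nats_def) (metis real_arch_simple atMost_iff UNIV_I rangeI)
  show "\<And>a. a \<in> ?LT`Nats \<Longrightarrow> emeasure M a \<noteq> \<infinity>"
    using fin by (auto simp: less_top)
  show "countable (?LT ` Nats)" by (auto simp: Nats_def intro!: countable_image)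
qed (auto intro: eq)

lemma radial_M:
  fixes d :: real assumes d: "d > 0"
  shows "distr (density lborel (\<lambda>p::real\<times>real. ennreal (indicator (cball 0 d) p))) borel norm
       = density lborel (\<lambda>r. ennreal (2 * pi * r * indicator {0..d} r))"
proof (rule measure_eqI_atMost)
  fix x :: real
  have A: "emeasure (distr (density lborel (\<lambda>p::real\<times>real. ennreal (indicator (cball 0 d) p))) borel norm) {..x}
      = (if x < 0 then 0 else ennreal (pi * (min x d)^2))"
  proof -
    have "emeasure (distr (density lborel (\<lambda>p::real\<times>real. ennreal (indicator (cball 0 d) p))) borel norm) {..x}
       = emeasure (density lborel (\<lambda>p::real\<times>real. ennreal (indicator (cball 0 d) p))) (norm -` {..x})"
      by (subst emeasure_distr) auto
    also have "\<dots> = (\<integral>\<^sup>+ p. ennreal (indicator (cball 0 d) p) * indicator (norm -` {..x}) p \<partial>(lborel::(real\<times>real) measure))"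
    proof -
      have m1: "norm -` {..x} \<in> sets (lborel::(real\<times>real) measure)"
        using closed_vimage[OF closed_atMost[of x] continuous_on_norm_id] by (metis borel_closed sets_lborel vimage_def)
      have m2: "(\<lambda>p. ennreal (indicator (cball (0::real\<times>real) d) p)) \<in> borel_measurable lborel"
        by (auto intro!: borel_measurable_indicator borel_closed)
      show ?thesis by (rule emeasure_density[OF m2 m1])
    qed
    also have "\<dots> = (\<integral>\<^sup>+ p. indicator (cball 0 d \<inter> norm -` {..x}) p \<partial>(lborel::(real\<times>real) measure))"
      by (intro nn_integral_cong) (auto simp: indicator_def)
    also have "\<dots> = emeasure (lborel::(real\<times>real) measure) (cball 0 d \<inter> norm -` {..x})"
    proof -
      have "closed (norm -` {..x} :: (real\<times>real) set)"
        using closed_vimage[OF closed_atMost[of x] continuous_on_norm_id] by (simp add: vimage_def)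
      then have "cball 0 d \<inter> norm -` {..x} \<in> sets (lborel::(real\<times>real) measure)"
        by (metis borel_closed closed_Int closed_cball sets_lborel)
      then show ?thesis by (rule nn_integral_indicator)
    qed
    also have "cball 0 d \<inter> norm -` {..x} = (if x < 0 then {} else cball (0::real\<times>real) (min x d))"
      by (auto simp: dist_0_norm) (smt (verit) norm_ge_zero)
    also have "emeasure lborel \<dots> = (if x < 0 then 0 else ennreal (pi * (min x d)^2))"
      using d by (auto simp: emeasure_cball unit_ball_vol_2 power2_eq_square)
    finally show ?thesis .
  qed
  have B: "emeasure (density lborel (\<lambda>r. ennreal (2 * pi * r * indicator {0..d} r))) {..x}
      = (if x < 0 then 0 else ennreal (pi * (min x d)^2))"
  proof -
    have "emeasure (density lborel (\<lambda>r. ennreal (2 * pi * r * indicator {0..d} r))) {..x}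
       = (\<integral>\<^sup>+ r. ennreal (2 * pi * r * indicator {0..d} r) * indicator {..x} r \<partial>lborel)"
      by (subst emeasure_density) auto
    also have "\<dots> = (\<integral>\<^sup>+ r. ennreal (2 * pi * r) * indicator (if x < 0 then {} else {0..min x d}) r \<partial>lborel)"
      by (intro nn_integral_cong) (auto simp: indicator_def)
    also have "\<dots> = (if x < 0 then 0 else ennreal (pi * (min x d)^2))"
    proof (cases "x < 0")
      case True then show ?thesis by simp
    next
      case False
      have "((\<lambda>r. 2 * pi * r) has_integral (pi * (min x d)^2 - pi * 0^2)) {0..min x d}"
        apply (rule fundamental_theorem_of_calculus)
        using False d apply simp
        apply (auto intro!: derivative_eq_intros simp: has_real_derivative_iff_has_vector_derivative[symmetric])
        done
      then have "(\<integral>\<^sup>+ r. ennreal (2 * pi * r) * indicator {0..min x d} r \<partial>lborel) = ennreal (pi * (min x d)^2)"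
        by (subst nn_integral_has_integral_lebesgue') auto
      then show ?thesis using False by simp
    qed
    finally show ?thesis .
  qed
  show "emeasure (distr (density lborel (\<lambda>p::real\<times>real. ennreal (indicator (cball 0 d) p))) borel norm) {..x}
      = emeasure (density lborel (\<lambda>r. ennreal (2 * pi * r * indicator {0..d} r))) {..x}"
    using A B by simp
  show "emeasure (distr (density lborel (\<lambda>p::real\<times>real. ennreal (indicator (cball 0 d) p))) borel norm) {..x} < \<infinity>"
    using A by simp
qed auto


lemma radial_integral:
  fixes d :: real and g :: "real \<Rightarrow> real"
  assumes d: "d > 0" and g: "continuous_on UNIV g"
  shows "integral (cball (0::real\<times>real) d) (\<lambda>p. g (norm p)) = 2 * pi * integral {0..d} (\<lambda>r. r * g r)"
proof -
  have gm: "g \<in> borel_measurable borel" using g by (rule borel_measurable_continuous_onI)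
  have cg: "continuous_on (cball 0 d) (\<lambda>p::real\<times>real. g (norm p))"
    by (rule continuous_on_compose2[OF g continuous_on_norm_id]) auto
  have i1: "integrable lborel (\<lambda>p::real\<times>real. indicator (cball 0 d) p *\<^sub>R g (norm p))"
    by (rule borel_integrable_compact[OF compact_cball cg])
  have h1: "((\<lambda>p::real\<times>real. indicator (cball 0 d) p *\<^sub>R g (norm p)) has_integral
      (integral\<^sup>L lborel (\<lambda>p::real\<times>real. indicator (cball 0 d) p *\<^sub>R g (norm p)))) UNIV"
    by (rule has_integral_integral_lborel[OF i1])
  have "integral (cball (0::real\<times>real) d) (\<lambda>p. g (norm p))
      = integral UNIV (\<lambda>p::real\<times>real. indicator (cball 0 d) p *\<^sub>R g (norm p))"
  proof -
    have "(\<lambda>p::real\<times>real. indicator (cball 0 d) p *\<^sub>R g (norm p)) = (\<lambda>p. if p \<in> cball 0 d then g (norm p) else 0)"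
      by (auto simp: indicator_def fun_eq_iff)
    then show ?thesis by (simp only: integral_restrict_UNIV)
  qed
  also have "\<dots> = integral\<^sup>L lborel (\<lambda>p::real\<times>real. indicator (cball 0 d) p *\<^sub>R g (norm p))"
    using h1 by (rule integral_unique)
  also have "\<dots> = integral\<^sup>L (density lborel (\<lambda>p::real\<times>real. ennreal (indicator (cball 0 d) p))) (\<lambda>p. g (norm p))"
  proof -
    have m1: "(\<lambda>p::real\<times>real. indicator (cball 0 d) p :: real) \<in> borel_measurable lborel"
      by (intro borel_measurable_indicator) (simp add: borel_closed)
    have m2: "(\<lambda>p::real\<times>real. g (norm p)) \<in> borel_measurable lborel"
      using borel_measurable_continuous_onI[OF continuous_on_compose2[OF g continuous_on_norm_id]] by simp
    show ?thesis
      by (subst integral_density[OF m2 m1]) simp_all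
  qed
  also have "\<dots> = integral\<^sup>L (distr (density lborel (\<lambda>p::real\<times>real. ennreal (indicator (cball 0 d) p))) borel norm) g"
    by (subst integral_distr) (simp_all add: gm)
  also have "\<dots> = integral\<^sup>L (density lborel (\<lambda>r. ennreal (2 * pi * r * indicator {0..d} r))) g"
    by (simp add: radial_M[OF d])
  also have "\<dots> = integral\<^sup>L lborel (\<lambda>r. (2 * pi * r * indicator {0..d} r) *\<^sub>R g r)"
  proof -
    have m1: "(\<lambda>r. 2 * pi * r * indicator {0..d} r :: real) \<in> borel_measurable lborel"
      by (intro borel_measurable_times borel_measurable_indicator) simp_all
    show ?thesis
      by (subst integral_density[OF _ m1]) (simp_all add: gm indicator_def)
  qed
  also have "\<dots> = integral\<^sup>L lborel (\<lambda>r. indicator {0..d} r *\<^sub>R (2 * pi * r * g r))"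
    by (intro Bochner_Integration.integral_cong) (auto simp: indicator_def)
  also have "\<dots> = integral UNIV (\<lambda>r. indicator {0..d} r *\<^sub>R (2 * pi * r * g r))"
  proof -
    have cg2: "continuous_on {0..d} (\<lambda>r. 2 * pi * r * g r)"
      by (intro continuous_intros continuous_on_subset[OF g]) auto
    show ?thesis
      by (rule integral_unique[symmetric], rule has_integral_integral_lborel, rule borel_integrable_compact[OF compact_Icc cg2])
  qed
  also have "\<dots> = integral {0..d} (\<lambda>r. 2 * pi * r * g r)"
  proof -
    have "(\<lambda>r. indicator {0..d} r *\<^sub>R (2 * pi * r * g r)) = (\<lambda>r. if r \<in> {0..d} then 2 * pi * r * g r else 0)"
      by (auto simp: indicator_def fun_eq_iff)
    then show ?thesis by (simp only: integral_restrict_UNIV)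
  qed
  also have "\<dots> = 2 * pi * integral {0..d} (\<lambda>r. r * g r)"
    by (simp add: mult.assoc)
  finally show ?thesis .
qed



lemma deriv_poly_fun: "deriv (poly p) = poly (pderiv p)"
  by (rule ext, rule DERIV_imp_deriv, rule poly_DERIV)

lemma deriv_funpow_poly: "(deriv ^^ k) (poly p) = poly ((pderiv ^^ k) p)"
  by (induction k) (simp_all add: deriv_poly_fun)

definition LQ :: "nat \<Rightarrow> real poly" where
  "LQ l = smult (1 / (2 ^ l * fact l)) ((pderiv ^^ l) ([:-1, 0, 1:] ^ l))"

lemma assoc_legendre_poly: "assoc_legendre l 0 = poly (LQ l)"
proof -
  have eq: "(\<lambda>t::real. (t\<^sup>2 - 1) ^ l) = poly ([:-1, 0, 1:] ^ l)"
    by (rule ext) (simp add: poly_power power2_eq_square algebra_simps)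
  then show ?thesis
    unfolding assoc_legendre_def LQ_def eq deriv_funpow_poly by (simp add: fun_eq_iff)
qed

lemma sph_Y_0: "sph_Y l 0 t p = complex_of_real (sqrt ((2 * real l + 1) / (4 * pi)) * poly (LQ l) (cos t))"
  by (simp add: sph_Y_def assoc_legendre_poly)

lemma vd_sph_Y_0: "vector_derivative (\<lambda>t. sph_Y l 0 t p) (at th)
   = complex_of_real (sqrt ((2 * real l + 1) / (4 * pi)) * (poly (pderiv (LQ l)) (cos th) * - sin th))"
proof -
  have "((\<lambda>t. sph_Y l 0 t p) has_vector_derivative
     complex_of_real (sqrt ((2 * real l + 1) / (4 * pi)) * (poly (pderiv (LQ l)) (cos th) * - sin th))) (at th)"
    unfolding sph_Y_0
    by (intro has_vector_derivative_of_real DERIV_cmult DERIV_chain2[OF poly_DERIV] DERIV_cos)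
  then show ?thesis by (rule vector_derivative_at)
qed

lemma cdot_nu_ez: "cdot (nu l 0 th p) e_z = complex_of_real (sqrt ((2 * real l + 1) / (4 * pi)) *
    (- real (l + 1) * cos th * poly (LQ l) (cos th) + (sin th)\<^sup>2 * poly (pderiv (LQ l)) (cos th)))"
  apply (simp add: cdot_def nu_def sum_3 e_z_def cvec_def vd_sph_Y_0 e_R_def e_theta_def e_phi_def)
  apply (simp add: sph_Y_0 power2_eq_square algebra_simps)
  done



lemma powr_half_pow: "s > 0 \<Longrightarrow> s powr (real n / 2) = sqrt s ^ n"
proof -
  assume s: "s > 0"
  have "sqrt s ^ n = (s powr (1/2)) ^ n" using s by (simp add: powr_half_sqrt)
  also have "\<dots> = (s powr (1/2)) powr real n" using s by (simp add: powr_realpow)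
  also have "\<dots> = s powr (real n / 2)" by (simp add: powr_powr)
  finally show ?thesis by simp
qed

definition GG :: "real \<Rightarrow> nat \<Rightarrow> real \<Rightarrow> real" where
  "GG rC l r = sqrt ((2 * real l + 1) / (4 * pi)) *
     (- real (l + 1) * (rC / sqrt (r\<^sup>2 + rC\<^sup>2)) * poly (LQ l) (rC / sqrt (r\<^sup>2 + rC\<^sup>2))
      + (r\<^sup>2 / (r\<^sup>2 + rC\<^sup>2)) * poly (pderiv (LQ l)) (rC / sqrt (r\<^sup>2 + rC\<^sup>2)))
     / sqrt (r\<^sup>2 + rC\<^sup>2) ^ (l + 2)"

lemma pointwise:
  assumes rC: "rC > 0"
  shows "cdot (nu l 0 (sphTheta rC x y) (sphPhi x y)) e_z / complex_of_real (sphR rC x y ^ (l + 2))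
       = complex_of_real (GG rC l (norm (x, y)))"
proof -
  define R where "R = sqrt (x\<^sup>2 + y\<^sup>2 + rC\<^sup>2)"
  have n2: "(norm (x, y))\<^sup>2 = x\<^sup>2 + y\<^sup>2" by (simp add: norm_Pair)
  have Rpos: "R > 0" unfolding R_def using rC by (intro real_sqrt_gt_zero) (smt (verit) zero_le_power2 power2_less_0 zero_less_power2)
  have RR: "R\<^sup>2 = x\<^sup>2 + y\<^sup>2 + rC\<^sup>2" unfolding R_def by (simp add: add_nonneg_nonneg)
  have le: "rC \<le> R" unfolding R_def using rC by (intro real_le_rsqrt) simp
  have q1: "-1 \<le> rC / R" "rC / R \<le> 1" using le rC Rpos by (auto simp: field_simps)
  have cs: "cos (arccos (rC / R)) = rC / R" using q1 by (simp add: cos_arccos)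
  have sn: "(sin (arccos (rC / R)))\<^sup>2 = (x\<^sup>2 + y\<^sup>2) / (x\<^sup>2 + y\<^sup>2 + rC\<^sup>2)"
  proof -
    have "(sin (arccos (rC / R)))\<^sup>2 = 1 - (rC / R)\<^sup>2"
      using q1 by (simp add: sin_arccos abs_square_le_1 power2_abs)
    also have "\<dots> = (x\<^sup>2 + y\<^sup>2) / (x\<^sup>2 + y\<^sup>2 + rC\<^sup>2)"
    proof -
      have D: "x\<^sup>2 + y\<^sup>2 + rC\<^sup>2 > 0" using rC by (simp add: add_nonneg_pos)
      show ?thesis unfolding power_divide RR using D by (simp add: field_simps)
    qed
    finally show ?thesis .
  qed
  have sR: "sphR rC x y = R" by (simp add: sphR_def R_def)
  have sT: "sphTheta rC x y = arccos (rC / R)" by (simp add: sphTheta_def sR)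
  have R2: "sqrt ((norm (x, y))\<^sup>2 + rC\<^sup>2) = R" by (simp add: n2 R_def)
  have e1: "cdot (nu l 0 (sphTheta rC x y) (sphPhi x y)) e_z = complex_of_real (sqrt ((2 * real l + 1) / (4 * pi)) *
    (- real (l + 1) * (rC / R) * poly (LQ l) (rC / R) + ((x\<^sup>2 + y\<^sup>2) / (x\<^sup>2 + y\<^sup>2 + rC\<^sup>2)) * poly (pderiv (LQ l)) (rC / R)))"
    by (simp only: sT cdot_nu_ez cs sn)
  have e2: "GG rC l (norm (x, y)) = sqrt ((2 * real l + 1) / (4 * pi)) *
    (- real (l + 1) * (rC / R) * poly (LQ l) (rC / R) + ((x\<^sup>2 + y\<^sup>2) / (x\<^sup>2 + y\<^sup>2 + rC\<^sup>2)) * poly (pderiv (LQ l)) (rC / R))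
     / R ^ (l + 2)"
    by (simp only: GG_def n2 R_def[symmetric])
  show ?thesis by (simp only: e1 e2 sR of_real_divide)
qed


lemma GG_cont: assumes rC: "rC > 0" shows "continuous_on UNIV (GG rC l)"
proof -
  have p: "\<And>r::real. r\<^sup>2 + rC\<^sup>2 > 0" using rC by (simp add: add_nonneg_pos)
  have s: "\<And>r::real. sqrt (r\<^sup>2 + rC\<^sup>2) \<noteq> 0" using p by (metis less_irrefl real_sqrt_gt_zero)
  have p': "\<And>r::real. r\<^sup>2 + rC\<^sup>2 \<noteq> 0" using p by (metis less_irrefl)
  show ?thesis unfolding GG_def
    apply (intro continuous_intros)
    using s p' apply simp_all
    done
qed

lemma gam_eq:
  assumes d: "d > 0" and rC: "rC > 0"
  shows "integral {0..d} (\<lambda>r. r * GG rC l r) = sqrt ((2 * real l + 1) / (4 * pi))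
      * (- real (l + 1) * rC * gam d rC 1 (l + 3) 0 l + gam d rC 3 (l + 4) 1 l)"
proof -
  define S where "S = (\<lambda>r::real. sqrt (r\<^sup>2 + rC\<^sup>2))"
  have p: "\<And>r::real. r\<^sup>2 + rC\<^sup>2 > 0" using rC by (simp add: add_nonneg_pos)
  have Sp: "\<And>r. S r > 0" unfolding S_def using p by simp
  define f1 where "f1 = (\<lambda>r::real. r ^ 1 / (r\<^sup>2 + rC\<^sup>2) powr (real (l + 3) / 2)
        * (deriv ^^ 0) (assoc_legendre l 0) (rC / sqrt (r\<^sup>2 + rC\<^sup>2)))"
  define f2 where "f2 = (\<lambda>r::real. r ^ 3 / (r\<^sup>2 + rC\<^sup>2) powr (real (l + 4) / 2)
        * (deriv ^^ 1) (assoc_legendre l 0) (rC / sqrt (r\<^sup>2 + rC\<^sup>2)))"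
  have f1e: "f1 = (\<lambda>r. r / S r ^ (l + 3) * poly (LQ l) (rC / S r))"
    unfolding f1_def S_def using p by (simp add: powr_half_pow assoc_legendre_poly del: of_nat_add)
  have f2e: "f2 = (\<lambda>r. r ^ 3 / S r ^ (l + 4) * poly (pderiv (LQ l)) (rC / S r))"
    unfolding f2_def S_def using p by (simp add: powr_half_pow assoc_legendre_poly deriv_poly_fun del: of_nat_add)
  have Sc: "continuous_on UNIV S" unfolding S_def by (intro continuous_intros)
  have Sn: "\<And>r. S r \<noteq> 0" using Sp by (metis less_irrefl)
  have i1: "f1 integrable_on {0..d}" unfolding f1e
    by (intro integrable_continuous_interval continuous_intros
        continuous_on_subset[OF Sc]) (auto simp: Sn)
  have i2: "f2 integrable_on {0..d}" unfolding f2e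
    by (intro integrable_continuous_interval continuous_intros
        continuous_on_subset[OF Sc]) (auto simp: Sn)
  have g1: "gam d rC 1 (l + 3) 0 l = integral {0..d} f1" unfolding gam_def f1_def by simp
  have g2: "gam d rC 3 (l + 4) 1 l = integral {0..d} f2" unfolding gam_def f2_def by simp
  have pt: "\<And>r. r * GG rC l r = sqrt ((2 * real l + 1) / (4 * pi)) * (- real (l + 1) * rC * f1 r + f2 r)"
  proof -
    fix r :: real
    have SS: "r\<^sup>2 + rC\<^sup>2 = S r ^ 2" unfolding S_def using p[of r] by simp
    show "r * GG rC l r = sqrt ((2 * real l + 1) / (4 * pi)) * (- real (l + 1) * rC * f1 r + f2 r)"
    proof -
      have e3: "S r ^ (l+3) = S r ^ (l+2) * S r" "S r ^ (l+4) = S r ^ (l+2) * S r * S r"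
        by (simp_all add: eval_nat_numeral algebra_simps)
      have sa: "sqrt (S r ^ 2) = S r" using Sp[of r] by simp
      have nz: "S r ^ (l+2) \<noteq> 0" using Sn[of r] by simp
      show ?thesis
        unfolding GG_def f1e f2e S_def[symmetric] SS sa e3 using Sn[of r] nz
        by (simp add: field_simps power2_eq_square power3_eq_cube)
    qed
  qed
  have "integral {0..d} (\<lambda>r. r * GG rC l r)
      = integral {0..d} (\<lambda>r. sqrt ((2 * real l + 1) / (4 * pi)) * (- real (l + 1) * rC * f1 r + f2 r))"
    by (simp add: pt)
  also have "\<dots> = sqrt ((2 * real l + 1) / (4 * pi)) * (- real (l + 1) * rC * integral {0..d} f1 + integral {0..d} f2)"
  proof -
    have "integral {0..d} (\<lambda>r. - real (l + 1) * rC * f1 r + f2 r) = integral {0..d} (\<lambda>r. - real (l + 1) * rC * f1 r) + integral {0..d} f2"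
      by (rule integral_add[OF integrable_on_mult_right[OF i1] i2])
    also have "\<dots> = - real (l + 1) * rC * integral {0..d} f1 + integral {0..d} f2"
      by (simp only: integral_mult_right)
    finally show ?thesis by (simp only: integral_mult_right)
  qed
  finally show ?thesis by (simp only: g1 g2)
qed

theorem mainTheorem3:
  fixes d rC :: real and l :: nat
  assumes "d > 0" and "rC > 0" and "l \<ge> 1"
  shows "integral {p :: real \<times> real. (fst p)\<^sup>2 + (snd p)\<^sup>2 \<le> d\<^sup>2}
           (\<lambda>p. cdot (nu l 0 (sphTheta rC (fst p) (snd p)) (sphPhi (fst p) (snd p))) e_z
                 / complex_of_real (sphR rC (fst p) (snd p) ^ (l + 2)))
         = complex_of_real (2 * pi * sqrt ((2 * real l + 1) / (4 * pi))
             * (- real (l + 1) * rC * gam d rC 1 (l + 3) 0 l + gam d rC 3 (l + 4) 1 l))"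
proof -
  have set: "{p :: real \<times> real. (fst p)\<^sup>2 + (snd p)\<^sup>2 \<le> d\<^sup>2} = cball 0 d"
  proof (rule set_eqI)
    fix p :: "real \<times> real"
    obtain x y where xy: "p = (x, y)" by fastforce
    have "x\<^sup>2 + y\<^sup>2 \<le> d\<^sup>2 \<longleftrightarrow> sqrt (x\<^sup>2 + y\<^sup>2) \<le> sqrt (d\<^sup>2)"
      by (rule real_sqrt_le_iff[symmetric])
    also have "sqrt (d\<^sup>2) = d" using assms(1) by simp
    finally have "x\<^sup>2 + y\<^sup>2 \<le> d\<^sup>2 \<longleftrightarrow> sqrt (x\<^sup>2 + y\<^sup>2) \<le> d" .
    then show "p \<in> {p. (fst p)\<^sup>2 + (snd p)\<^sup>2 \<le> d\<^sup>2} \<longleftrightarrow> p \<in> cball 0 d"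
      unfolding xy mem_Collect_eq fst_conv snd_conv mem_cball_0 norm_Pair real_norm_def power2_abs .
  qed
  have fn: "(\<lambda>p. cdot (nu l 0 (sphTheta rC (fst p) (snd p)) (sphPhi (fst p) (snd p))) e_z
                 / complex_of_real (sphR rC (fst p) (snd p) ^ (l + 2)))
        = complex_of_real \<circ> (\<lambda>p. GG rC l (norm p))"
  proof (rule ext)
    fix p :: "real \<times> real"
    have "cdot (nu l 0 (sphTheta rC (fst p) (snd p)) (sphPhi (fst p) (snd p))) e_z
                 / complex_of_real (sphR rC (fst p) (snd p) ^ (l + 2)) = complex_of_real (GG rC l (norm (fst p, snd p)))"
      by (rule pointwise[OF assms(2)])
    then show "cdot (nu l 0 (sphTheta rC (fst p) (snd p)) (sphPhi (fst p) (snd p))) e_z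
                 / complex_of_real (sphR rC (fst p) (snd p) ^ (l + 2)) = (complex_of_real \<circ> (\<lambda>p. GG rC l (norm p))) p"
      by (simp only: o_def prod.collapse)
  qed
  have int: "(\<lambda>p::real\<times>real. GG rC l (norm p)) integrable_on cball 0 d"
  proof -
    have cg: "continuous_on (cball 0 d) (\<lambda>p::real\<times>real. GG rC l (norm p))"
      by (rule continuous_on_compose2[OF GG_cont[OF assms(2)] continuous_on_norm_id]) auto
    have "(\<lambda>p::real\<times>real. indicator (cball 0 d) p *\<^sub>R GG rC l (norm p)) integrable_on UNIV"
      using has_integral_integral_lborel[OF borel_integrable_compact[OF compact_cball cg]]
      unfolding integrable_on_def by blast
    moreover have e: "(\<lambda>p::real\<times>real. indicator (cball 0 d) p *\<^sub>R GG rC l (norm p)) = (\<lambda>p. if p \<in> cball 0 d then GG rC l (norm p) else 0)"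
      by (auto simp: indicator_def fun_eq_iff)
    ultimately show ?thesis by (simp only: integrable_restrict_UNIV)
  qed
  show ?thesis
    unfolding set fn integral_linear[OF int bounded_linear_of_real] radial_integral[OF assms(1) GG_cont[OF assms(2)]]
      gam_eq[OF assms(1,2)] by (simp only: mult.assoc)
qed

end
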